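(* Let $\mathcal{C}$ be a finite set of latent classes with cardinality $N_{\mathcal{C}}$, let $\rho$ be the uniform distribution on $\mathcal{C}$, and for each $c\in\mathcal{C}$ let $\mathcal{D}_c$ be a distribution on a feature space $\mathcal{X}$. Let $N\ge1$ and let $k$ be an integer with $2\le k+1\le N_{\mathcal{C}}$. Then every encoder $f:\mathcal{X}\to\mathbb{R}^d$ satisfies $$L_{\mathrm{sup},k}(f)\le L^\mu_{\mathrm{sup},k}(f)\le\frac{k}{1-\tau_N^+}\big(L^N_{\mathrm{un}}(f)-\tau_N^+\log(N+1)\big),$$ where $\tau_N^+=\mathbb{P}[c_i=c\ \forall i\mid (c,c_1,\dots,c_N)\sim\rho^{\otimes(N+1)}]$.
   Context: Positive pairs are drawn from $\mathcal{D}_{\mathrm{sim}}(x,x^+)=\sum_{c}\rho(c)\mathcal{D}_c(x)\mathcal{D}_c(x^+)$ and negatives from $\mathcal{D}_{\mathrm{neg}}(x^-)=\sum_c\rho(c)\mathcal{D}_c(x^-)$. The unsupervised loss with $N$ negatives is $$L^N_{\mathrm{un}}(f)=\mathbb{E}_{(x,x^+)\sim\mathcal{D}_{\mathrm{sim}},\,X^-\sim\mathcal{D}_{\mathrm{neg}}^{\otimes N}}\Big[-\log\frac{\exp(f(x)^Tf(x^+))}{\exp(f(x)^Tf(x^+))+\sum_{x^-\in X^-}\exp(f(x)^Tf(x^-))}\Big].$$ A $(k+1)$-way task is a subset $\mathcal{T}\subseteq\mathcal{C}$ with $|\mathcal{T}|=k+1$; it induces $\mathcal{D}_{\mathcal{T}}(c)=\rho(c\mid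 c\in\mathcal{T})$ and $\mathcal{D}_{\mathcal{T}}(x,c)=\mathcal{D}_{\mathcal{T}}(c)\mathcal{D}_c(x)$. The supervised loss on $\mathcal{T}$ is $$L_{\mathrm{sup}}(f,\mathcal{T})=\inf_{W\in\mathbb{R}^{|\mathcal{T}|\times d}}\mathbb{E}_{(x,c)\sim\mathcal{D}_{\mathcal{T}}}\Big[-\log\frac{\exp((Wf(x))_c)}{\sum_{c'\in\mathcal{T}}\exp((Wf(x))_{c'})}\Big],$$ and $L^\mu_{\mathrm{sup}}(f,\mathcal{T})$ is the same expectation evaluated at the mean classifier $W^\mu$ with rows $W^\mu_{c,:}=\mathbb{E}_{x\sim\mathcal{D}_c}[f(x)]$, $c\in\mathcal{T}$. Finally $L_{\mathrm{sup},k}(f)=\mathbb{E}_{\mathcal{T}\sim\mathcal{D}^{k+1}}[L_{\mathrm{sup}}(f,\mathcal{T})]$ and $L^\mu_{\mathrm{sup},k}(f)=\mathbb{E}_{\mathcal{T}\sim\mathcal{D}^{k+1}}[L^\mu_{\mathrm{sup}}(f,\mathcal{T})]$, where $\mathcal{D}^{k+1}$ is the uniform distribution over subsets of $k+1$ distinct classes of $\mathcal{C}$. *)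

theory Defs
  imports "HOL-Probability.Probability"
begin

text \<open>Encoders take values in real^'d (d = CARD('d)).\<close>

text \<open>Since rho is uniform on C,
  D_sim = (1/|C|) sum_c D_c (x) D_c (x+), and D_neg^{(x)N} is the uniform average over class
  tuples cs in C^N of the product measures prod_i D_(cs i).\<close>
definition Lun :: "'c set \<Rightarrow> ('c \<Rightarrow> 'x measure) \<Rightarrow> nat \<Rightarrow> ('x \<Rightarrow> real^'d) \<Rightarrow> real" where
  "Lun C D N f =
     (1 / real (card C)) * (\<Sum>c\<in>C. \<integral>x. \<integral>xp.
        (1 / real (card C) ^ N) * (\<Sum>cs\<in>PiE {..<N} (\<lambda>_. C).
           \<integral>xs. - ln (exp (f x \<bullet> f xp) /
                     (exp (f x \<bullet> f xp) + (\<Sum>i<N. exp (f x \<bullet> f (xs i)))))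
           \<partial>(PiM {..<N} (\<lambda>i. D (cs i))))
      \<partial>(D c) \<partial>(D c))"

text \<open>Supervised cross-entropy loss on task T for a linear classifier whose row for class c
  is W c (only rows c in T matter); D_T(c) = rho(c | c in T) is uniform on T.\<close>
definition Lsup_W :: "'c set \<Rightarrow> ('c \<Rightarrow> 'x measure) \<Rightarrow> ('x \<Rightarrow> real^'d) \<Rightarrow> ('c \<Rightarrow> real^'d) \<Rightarrow> real" where
  "Lsup_W T D f W =
     (1 / real (card T)) * (\<Sum>c\<in>T. \<integral>x. - ln (exp (W c \<bullet> f x) / (\<Sum>c'\<in>T. exp (W c' \<bullet> f x))) \<partial>(D c))"

definition Lsup :: "'c set \<Rightarrow> ('c \<Rightarrow> 'x measure) \<Rightarrow> ('x \<Rightarrow> real^'d) \<Rightarrow> real" where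
  "Lsup T D f = (INF W. Lsup_W T D f W)"

definition Lsup_mu :: "'c set \<Rightarrow> ('c \<Rightarrow> 'x measure) \<Rightarrow> ('x \<Rightarrow> real^'d) \<Rightarrow> real" where
  "Lsup_mu T D f = Lsup_W T D f (\<lambda>c. \<integral>x. f x \<partial>(D c))"

definition tasks :: "'c set \<Rightarrow> nat \<Rightarrow> 'c set set" where
  "tasks C k = {T. T \<subseteq> C \<and> card T = k + 1}"

definition Lsup_k :: "'c set \<Rightarrow> ('c \<Rightarrow> 'x measure) \<Rightarrow> nat \<Rightarrow> ('x \<Rightarrow> real^'d) \<Rightarrow> real" where
  "Lsup_k C D k f = (1 / real (card (tasks C k))) * (\<Sum>T\<in>tasks C k. Lsup T D f)"

definition Lsup_mu_k :: "'c set \<Rightarrow> ('c \<Rightarrow> 'x measure) \<Rightarrow> nat \<Rightarrow> ('x \<Rightarrow> real^'d) \<Rightarrow> real" where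
  "Lsup_mu_k C D k f = (1 / real (card (tasks C k))) * (\<Sum>T\<in>tasks C k. Lsup_mu T D f)"

definition tau_plus :: "'c set \<Rightarrow> nat \<Rightarrow> real" where
  "tau_plus C N = measure_pmf.prob
     (pair_pmf (pmf_of_set C) (Pi_pmf {..<N} undefined (\<lambda>_. pmf_of_set C)))
     {(c, cs). \<forall>i<N. cs i = c}"

end

theory Submission
  imports Defs
begin

definition Phi :: "nat \<Rightarrow> (nat \<Rightarrow> real) \<Rightarrow> real" where
  "Phi N v = ln (1 + (\<Sum>i<N. exp (v i)))"

lemma Phi_cong: "(\<And>i. i < N \<Longrightarrow> v i = w i) \<Longrightarrow> Phi N v = Phi N w"
  unfolding Phi_def by (metis (no_types, lifting) lessThan_iff sum.cong)

lemma Phi_pos_arg: "0 < 1 + (\<Sum>i<N. exp (v i :: real))"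
  by (smt (verit) exp_gt_zero sum_nonneg)

lemma Phi_nonneg: "0 \<le> Phi N v"
  unfolding Phi_def by (smt (verit) exp_gt_zero ln_ge_zero sum_nonneg)

lemma Phi_upper: "Phi N v \<le> ln (real N + 1) + (\<Sum>i<N. \<bar>v i\<bar>)"
proof -
  let ?S = "\<Sum>i<N. \<bar>v i\<bar>"
  have S0: "0 \<le> ?S" by (simp add: sum_nonneg)
  have "\<And>i. i < N \<Longrightarrow> exp (v i) \<le> exp ?S"
  proof -
    fix i assume "i < N"
    then have "\<bar>v i\<bar> \<le> ?S" by (intro member_le_sum) auto
    then show "exp (v i) \<le> exp ?S" by simp
  qed
  then have "(\<Sum>i<N. exp (v i)) \<le> (\<Sum>i<N. exp ?S)" by (intro sum_mono) auto
  moreover have "1 \<le> exp ?S" using S0 by simp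
  ultimately have "1 + (\<Sum>i<N. exp (v i)) \<le> (real N + 1) * exp ?S"
    by (simp add: algebra_simps; linarith)
  then have "ln (1 + (\<Sum>i<N. exp (v i))) \<le> ln ((real N + 1) * exp ?S)"
    using Phi_pos_arg by (subst ln_le_cancel_iff) auto
  also have "\<dots> = ln (real N + 1) + ?S" by (simp add: ln_mult)
  finally show ?thesis unfolding Phi_def .
qed

lemma Phi_ge_single: assumes "i < N" shows "ln (1 + exp (v i)) \<le> Phi N v"
proof -
  have "exp (v i) \<le> (\<Sum>i<N. exp (v i))" by (rule member_le_sum) (use assms in auto)
  then show ?thesis unfolding Phi_def
    using Phi_pos_arg[of v N] by (subst ln_le_cancel_iff) (auto intro: add_pos_pos)
qed

lemma Phi_zero: "Phi N (\<lambda>_. 0) = ln (real N + 1)"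
  unfolding Phi_def by (simp add: add.commute)

definition pw :: "nat \<Rightarrow> (nat \<Rightarrow> real) \<Rightarrow> nat \<Rightarrow> real" where
  "pw N w i = exp (w i) / (1 + (\<Sum>j<N. exp (w j)))"

lemma Phi_tangent: "Phi N w + (\<Sum>i<N. pw N w i * (v i - w i)) \<le> Phi N v"
proof -
  define Z where "Z = 1 + (\<Sum>j<N. exp (w j))"
  have Z: "0 < Z" unfolding Z_def by (rule Phi_pos_arg)
  define a where "a i = (if i < N then exp (w i) / Z else 1 / Z)" for i
  define y where "y i = (if i < N then v i - w i else 0)" for i
  have sa: "(\<Sum>i<Suc N. a i) = 1"
    using Z by (simp add: a_def sum_divide_distrib[symmetric] add_divide_distrib[symmetric] Z_def)
  have "exp (\<Sum>i<Suc N. a i *\<^sub>R y i) \<le> (\<Sum>i<Suc N. a i * exp (y i))"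
    by (rule convex_on_sum[OF _ _ exp_convex sa]) (use Z in \<open>auto simp: a_def\<close>)
  also have "(\<Sum>i<Suc N. a i * exp (y i)) = (1 + (\<Sum>i<N. exp (v i))) / Z"
  proof -
    have "(\<Sum>i<N. a i * exp (y i)) = (\<Sum>i<N. exp (v i) / Z)"
      by (intro sum.cong) (auto simp: a_def y_def exp_diff)
    then show ?thesis by (simp add: a_def y_def sum_divide_distrib[symmetric] add_divide_distrib add.commute)
  qed
  finally have "(\<Sum>i<Suc N. a i *\<^sub>R y i) \<le> ln ((1 + (\<Sum>i<N. exp (v i))) / Z)"
    by (subst ln_ge_iff) (use Z Phi_pos_arg[of v N] in auto)
  also have "\<dots> = Phi N v - Phi N w"
    using Z Phi_pos_arg[of v N] unfolding Phi_def Z_def by (subst ln_div) auto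
  also have "(\<Sum>i<Suc N. a i *\<^sub>R y i) = (\<Sum>i<N. pw N w i * (v i - w i))"
    by (simp add: a_def y_def pw_def Z_def)
  finally show ?thesis by simp
qed

lemma Phi_meas:
  assumes "\<And>i. i < N \<Longrightarrow> Y i \<in> borel_measurable M"
  shows "(\<lambda>\<omega>. Phi N (\<lambda>i. Y i \<omega>)) \<in> borel_measurable M"
proof -
  have "(\<lambda>\<omega>. \<Sum>i<N. exp (Y i \<omega>)) \<in> borel_measurable M"
    using assms by (intro borel_measurable_sum) (auto intro: borel_measurable_exp)
  then show ?thesis unfolding Phi_def by measurable
qed

lemma jensen_Phi:
  assumes M: "prob_space M" and Y: "\<And>i. i < N \<Longrightarrow> integrable M (Y i)"
  shows "integrable M (\<lambda>\<omega>. Phi N (\<lambda>i. Y i \<omega>))"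
    and "Phi N (\<lambda>i. \<integral>\<omega>. Y i \<omega> \<partial>M) \<le> (\<integral>\<omega>. Phi N (\<lambda>i. Y i \<omega>) \<partial>M)"
    and "(\<integral>\<omega>. Phi N (\<lambda>i. Y i \<omega>) \<partial>M) \<le> ln (real N + 1) + (\<Sum>i<N. \<integral>\<omega>. \<bar>Y i \<omega>\<bar> \<partial>M)"
proof -
  interpret prob_space M by (rule M)
  have Ym: "\<And>i. i < N \<Longrightarrow> Y i \<in> borel_measurable M" using Y by auto
  have ub_int: "integrable M (\<lambda>\<omega>. ln (real N + 1) + (\<Sum>i<N. \<bar>Y i \<omega>\<bar>))"
    using Y by (intro Bochner_Integration.integrable_add Bochner_Integration.integrable_sum integrable_abs) auto
  show int: "integrable M (\<lambda>\<omega>. Phi N (\<lambda>i. Y i \<omega>))"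
  proof (rule Bochner_Integration.integrable_bound[OF ub_int])
    show "(\<lambda>\<omega>. Phi N (\<lambda>i. Y i \<omega>)) \<in> borel_measurable M" using Ym by (rule Phi_meas)
    show "AE x in M. norm (Phi N (\<lambda>i. Y i x)) \<le> norm (ln (real N + 1) + (\<Sum>i<N. \<bar>Y i x\<bar>))"
    proof (intro AE_I2)
      fix x
      have "0 \<le> Phi N (\<lambda>i. Y i x)" "Phi N (\<lambda>i. Y i x) \<le> ln (real N + 1) + (\<Sum>i<N. \<bar>Y i x\<bar>)"
        by (rule Phi_nonneg, rule Phi_upper)
      then show "norm (Phi N (\<lambda>i. Y i x)) \<le> norm (ln (real N + 1) + (\<Sum>i<N. \<bar>Y i x\<bar>))"
        by simp
    qed
  qed
  show "(\<integral>\<omega>. Phi N (\<lambda>i. Y i \<omega>) \<partial>M) \<le> ln (real N + 1) + (\<Sum>i<N. \<integral>\<omega>. \<bar>Y i \<omega>\<bar> \<partial>M)"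
  proof -
    have "(\<integral>\<omega>. Phi N (\<lambda>i. Y i \<omega>) \<partial>M) \<le> (\<integral>\<omega>. ln (real N + 1) + (\<Sum>i<N. \<bar>Y i \<omega>\<bar>) \<partial>M)"
      by (intro Bochner_Integration.integral_mono int ub_int Phi_upper)
    also have "\<dots> = ln (real N + 1) + (\<Sum>i<N. \<integral>\<omega>. \<bar>Y i \<omega>\<bar> \<partial>M)"
      using Y by (subst Bochner_Integration.integral_add) (auto intro!: Bochner_Integration.integrable_sum Bochner_Integration.integral_sum simp: prob_space)
    finally show ?thesis .
  qed
  define w where "w i = (\<integral>\<omega>. Y i \<omega> \<partial>M)" for i
  have lo_int: "integrable M (\<lambda>\<omega>. Phi N w + (\<Sum>i<N. pw N w i * (Y i \<omega> - w i)))"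
    using Y by (intro Bochner_Integration.integrable_add Bochner_Integration.integrable_sum Bochner_Integration.integrable_mult_right Bochner_Integration.integrable_diff) auto
  have "(\<integral>\<omega>. Phi N w + (\<Sum>i<N. pw N w i * (Y i \<omega> - w i)) \<partial>M)
        = Phi N w + (\<Sum>i<N. pw N w i * ((\<integral>\<omega>. Y i \<omega> \<partial>M) - w i))"
    using Y by (subst Bochner_Integration.integral_add) (auto intro!: Bochner_Integration.integrable_sum Bochner_Integration.integral_sum simp: Bochner_Integration.integral_sum Bochner_Integration.integral_diff prob_space)
  also have "\<dots> = Phi N w" by (simp add: w_def)
  finally have eq: "(\<integral>\<omega>. Phi N w + (\<Sum>i<N. pw N w i * (Y i \<omega> - w i)) \<partial>M) = Phi N w" .
  have "(\<integral>\<omega>. Phi N w + (\<Sum>i<N. pw N w i * (Y i \<omega> - w i)) \<partial>M) \<le> (\<integral>\<omega>. Phi N (\<lambda>i. Y i \<omega>) \<partial>M)"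
    by (intro Bochner_Integration.integral_mono lo_int int Phi_tangent)
  then show "Phi N (\<lambda>i. \<integral>\<omega>. Y i \<omega> \<partial>M) \<le> (\<integral>\<omega>. Phi N (\<lambda>i. Y i \<omega>) \<partial>M)"
    using eq unfolding w_def by simp
qed

lemma PiM_comp:
  assumes M: "\<And>i. i \<in> I \<Longrightarrow> prob_space (M i)" and i: "i \<in> I" and g: "g \<in> borel_measurable (M i)"
  shows "integrable (PiM I M) (\<lambda>\<omega>. g (\<omega> i)) \<longleftrightarrow> integrable (M i) g"
    and "(\<integral>\<omega>. g (\<omega> i) \<partial>PiM I M) = integral\<^sup>L (M i) (g :: _ \<Rightarrow> real)"
proof -
  have m: "(\<lambda>\<omega>. \<omega> i) \<in> measurable (PiM I M) (M i)" using i by (rule measurable_component_singleton)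
  have d: "distr (PiM I M) (M i) (\<lambda>\<omega>. \<omega> i) = M i" by (rule distr_PiM_component[OF M i])
  show "integrable (PiM I M) (\<lambda>\<omega>. g (\<omega> i)) \<longleftrightarrow> integrable (M i) g"
    using integrable_distr_eq[OF m g] d by simp
  show "(\<integral>\<omega>. g (\<omega> i) \<partial>PiM I M) = integral\<^sup>L (M i) g"
    using integral_distr[OF m g] d by simp
qed

lemma abs_inner_diff_le: "\<bar>a \<bullet> b - a \<bullet> c\<bar> \<le> norm a * norm b + norm a * norm (c :: 'a :: real_inner)"
  using Cauchy_Schwarz_ineq2[of a b] Cauchy_Schwarz_ineq2[of a c] by linarith

locale setting =
  fixes C :: "'c set" and D :: "'c \<Rightarrow> 'x measure" and X :: "'x measure"
    and f :: "'x \<Rightarrow> real^'d" and N :: nat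
  assumes finC: "finite C" and N1: "1 \<le> N" and C2: "2 \<le> card C"
    and prob: "\<And>c. c \<in> C \<Longrightarrow> prob_space (D c)"
    and sets_eq: "\<And>c. c \<in> C \<Longrightarrow> sets (D c) = sets X"
    and fm: "f \<in> borel_measurable X"
    and fint: "\<And>c. c \<in> C \<Longrightarrow> integrable (D c) f"
begin

definition mu where "mu c = (\<integral>x. f x \<partial>D c)"
definition Bn where "Bn = (\<Sum>c\<in>C. \<integral>x. norm (f x) \<partial>D c)"
definition P where "P cs = PiM {..<N} (\<lambda>i. D (cs i))"

lemma fD: "c \<in> C \<Longrightarrow> f \<in> borel_measurable (D c)"
  using fm sets_eq by (simp add: measurable_cong_sets[of "D c" X borel borel])

lemma int_norm: "c \<in> C \<Longrightarrow> integrable (D c) (\<lambda>x. norm (f x))"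
  using fint by auto

lemma Bn_ge: "c \<in> C \<Longrightarrow> (\<integral>x. norm (f x) \<partial>D c) \<le> Bn"
  unfolding Bn_def using finC by (intro member_le_sum) auto

lemma Bn_nonneg: "0 \<le> Bn"
  unfolding Bn_def by (intro sum_nonneg) auto

lemma int_const: "c \<in> C \<Longrightarrow> integrable (D c) (\<lambda>_. a :: real)"
  using prob by (metis finite_measure.integrable_const prob_space.finite_measure)

lemma integral_const_D: "c \<in> C \<Longrightarrow> (\<integral>_. a \<partial>D c) = (a :: real)"
  using prob by (simp add: prob_space.prob_space)

lemma int_inner: "c \<in> C \<Longrightarrow> integrable (D c) (\<lambda>y. a \<bullet> f y - b)"
  using fint int_const by (intro Bochner_Integration.integrable_diff integrable_inner_right) auto

lemma integral_inner: "c \<in> C \<Longrightarrow> (\<integral>y. a \<bullet> f y - b \<partial>D c) = a \<bullet> mu c - b"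
  using fint int_const integral_const_D unfolding mu_def
  by (subst Bochner_Integration.integral_diff) auto

lemma step1:
  assumes cs: "cs \<in> PiE {..<N} (\<lambda>_. C)"
  shows "integrable (P cs) (\<lambda>xs. Phi N (\<lambda>i. f x \<bullet> f (xs i) - f x \<bullet> f xp))"
    and "Phi N (\<lambda>i. f x \<bullet> mu (cs i) - f x \<bullet> f xp) \<le> (\<integral>xs. Phi N (\<lambda>i. f x \<bullet> f (xs i) - f x \<bullet> f xp) \<partial>P cs)"
    and "(\<integral>xs. Phi N (\<lambda>i. f x \<bullet> f (xs i) - f x \<bullet> f xp) \<partial>P cs) \<le> ln (real N + 1) + real N * (norm (f x) * (Bn + norm (f xp)))"
proof -
  have csC: "\<And>i. i < N \<Longrightarrow> cs i \<in> C" using cs by auto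
  have Mp: "\<And>i. i \<in> {..<N} \<Longrightarrow> prob_space (D (cs i))" using csC prob by auto
  have Pp: "prob_space (P cs)" unfolding P_def using Mp by (intro prob_space_PiM) auto
  let ?g = "\<lambda>xp y. f x \<bullet> f y - f x \<bullet> f xp"
  have gm: "\<And>i. i < N \<Longrightarrow> ?g xp \<in> borel_measurable (D (cs i))"
    using fD csC by measurable
  have Yint: "\<And>i. i < N \<Longrightarrow> integrable (P cs) (\<lambda>xs. ?g xp (xs i))"
  proof -
    fix i assume i: "i < N"
    have "integrable (P cs) (\<lambda>xs. ?g xp (xs i)) \<longleftrightarrow> integrable (D (cs i)) (?g xp)"
      unfolding P_def by (rule PiM_comp(1)[OF Mp]) (use i gm in auto)
    then show "integrable (P cs) (\<lambda>xs. ?g xp (xs i))" using int_inner csC i by auto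
  qed
  have Yi: "\<And>i. i < N \<Longrightarrow> (\<integral>xs. ?g xp (xs i) \<partial>P cs) = f x \<bullet> mu (cs i) - f x \<bullet> f xp"
  proof -
    fix i assume i: "i < N"
    have "(\<integral>xs. ?g xp (xs i) \<partial>P cs) = integral\<^sup>L (D (cs i)) (?g xp)"
      unfolding P_def by (rule PiM_comp(2)[OF Mp]) (use i gm in auto)
    then show "(\<integral>xs. ?g xp (xs i) \<partial>P cs) = f x \<bullet> mu (cs i) - f x \<bullet> f xp" using integral_inner csC i by auto
  qed
  note J = jensen_Phi[where M="P cs" and N=N and Y="\<lambda>i xs. ?g xp (xs i)", OF Pp Yint]
  show "integrable (P cs) (\<lambda>xs. Phi N (\<lambda>i. f x \<bullet> f (xs i) - f x \<bullet> f xp))" by (rule J(1))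
  show "Phi N (\<lambda>i. f x \<bullet> mu (cs i) - f x \<bullet> f xp) \<le> (\<integral>xs. Phi N (\<lambda>i. f x \<bullet> f (xs i) - f x \<bullet> f xp) \<partial>P cs)"
  proof -
    have "Phi N (\<lambda>i. \<integral>xs. ?g xp (xs i) \<partial>P cs) = Phi N (\<lambda>i. f x \<bullet> mu (cs i) - f x \<bullet> f xp)"
      by (rule Phi_cong) (simp add: Yi)
    then show ?thesis using J(2) by simp
  qed
  have absb: "(\<integral>xs. \<bar>?g xp (xs i)\<bar> \<partial>P cs) \<le> norm (f x) * (Bn + norm (f xp))" if i: "i < N" for i
  proof -
    have am: "(\<lambda>y. \<bar>?g xp y\<bar>) \<in> borel_measurable (D (cs i))" using gm[OF i] by measurable
    have "(\<integral>xs. \<bar>?g xp (xs i)\<bar> \<partial>P cs) = (\<integral>y. \<bar>?g xp y\<bar> \<partial>D (cs i))"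
      unfolding P_def by (rule PiM_comp(2)[OF Mp]) (use i am in auto)
    also have "\<dots> \<le> (\<integral>y. norm (f x) * norm (f y) + norm (f x) * norm (f xp) \<partial>D (cs i))"
      using int_norm[OF csC[OF i]] int_const[OF csC[OF i]]
      by (intro Bochner_Integration.integral_mono abs_inner_diff_le Bochner_Integration.integrable_add
          Bochner_Integration.integrable_mult_right integrable_abs int_inner csC i)
    also have "\<dots> = norm (f x) * (\<integral>y. norm (f y) \<partial>D (cs i)) + norm (f x) * norm (f xp)"
      using int_norm[OF csC[OF i]] int_const[OF csC[OF i]] integral_const_D[OF csC[OF i]]
      by (subst Bochner_Integration.integral_add) auto
    also have "\<dots> \<le> norm (f x) * (Bn + norm (f xp))"
      using Bn_ge[OF csC[OF i]] by (simp add: distrib_left mult_left_mono)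
    finally show ?thesis .
  qed
  have "(\<integral>xs. Phi N (\<lambda>i. f x \<bullet> f (xs i) - f x \<bullet> f xp) \<partial>P cs) \<le> ln (real N + 1) + (\<Sum>i<N. \<integral>xs. \<bar>?g xp (xs i)\<bar> \<partial>P cs)"
    by (rule J(3))
  also have "\<dots> \<le> ln (real N + 1) + (\<Sum>i<N. norm (f x) * (Bn + norm (f xp)))"
    using absb by (intro add_left_mono sum_mono) auto
  finally show "(\<integral>xs. Phi N (\<lambda>i. f x \<bullet> f (xs i) - f x \<bullet> f xp) \<partial>P cs) \<le> ln (real N + 1) + real N * (norm (f x) * (Bn + norm (f xp)))"
    by simp
qed

end

context setting begin

definition H where "H cs x xp = (\<integral>xs. Phi N (\<lambda>i. f x \<bullet> f (xs i) - f x \<bullet> f xp) \<partial>P cs)"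

lemma P_prob: "cs \<in> PiE {..<N} (\<lambda>_. C) \<Longrightarrow> prob_space (P cs)"
  unfolding P_def using prob by (intro prob_space_PiM) auto

lemma P_sets: "cs \<in> PiE {..<N} (\<lambda>_. C) \<Longrightarrow> sets (P cs) = sets (PiM {..<N} (\<lambda>_. X))"
  unfolding P_def using sets_eq by (intro sets_PiM_cong) auto

lemma H_meas:
  assumes cs: "cs \<in> PiE {..<N} (\<lambda>_. C)" and c: "c \<in> C"
  shows "(\<lambda>z. H cs (fst z) (snd z)) \<in> borel_measurable (D c \<Otimes>\<^sub>M D c)"
proof -
  interpret Pp: prob_space "P cs" by (rule P_prob[OF cs])
  have mx: "(\<lambda>(z, xs). Phi N (\<lambda>i. f (fst z) \<bullet> f (xs i) - f (fst z) \<bullet> f (snd z))) \<in> borel_measurable ((X \<Otimes>\<^sub>M X) \<Otimes>\<^sub>M PiM {..<N} (\<lambda>_. X))"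
  proof -
    let ?M = "(X \<Otimes>\<^sub>M X) \<Otimes>\<^sub>M PiM {..<N} (\<lambda>_. X)"
    have a: "(\<lambda>p. f (fst (fst p))) \<in> borel_measurable ?M" using fm by measurable
    have b: "(\<lambda>p. f (snd (fst p))) \<in> borel_measurable ?M" using fm by measurable
    have c: "(\<lambda>p. f (snd p i)) \<in> borel_measurable ?M" if "i < N" for i
    proof -
      have ci: "(\<lambda>xs. xs i) \<in> measurable (PiM {..<N} (\<lambda>_. X)) X"
        using measurable_component_singleton[of i "{..<N}" "\<lambda>_. X"] that by simp
      have "(\<lambda>p. snd p i) \<in> measurable ?M X"
        by (rule measurable_compose[OF measurable_snd ci])
      then show ?thesis using fm by (rule measurable_compose)
    qed
    have "(\<lambda>p. \<Sum>i<N. exp (f (fst (fst p)) \<bullet> f (snd p i) - f (fst (fst p)) \<bullet> f (snd (fst p)))) \<in> borel_measurable ?M"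
    proof (rule borel_measurable_sum)
      fix i assume "i \<in> {..<N}"
      then have c': "(\<lambda>p. f (snd p i)) \<in> borel_measurable ?M" using c by auto
      show "(\<lambda>p. exp (f (fst (fst p)) \<bullet> f (snd p i) - f (fst (fst p)) \<bullet> f (snd (fst p)))) \<in> borel_measurable ?M"
        by (intro measurable_compose[OF _ borel_measurable_exp] borel_measurable_diff borel_measurable_inner a b c') 
    qed
    then have "(\<lambda>p. ln (1 + (\<Sum>i<N. exp (f (fst (fst p)) \<bullet> f (snd p i) - f (fst (fst p)) \<bullet> f (snd (fst p)))))) \<in> borel_measurable ?M"
      by (intro borel_measurable_ln borel_measurable_add borel_measurable_const)
    then show ?thesis unfolding Phi_def case_prod_beta' .
  qed
  have se: "sets ((D c \<Otimes>\<^sub>M D c) \<Otimes>\<^sub>M P cs) = sets ((X \<Otimes>\<^sub>M X) \<Otimes>\<^sub>M PiM {..<N} (\<lambda>_. X))"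
    using sets_eq[OF c] P_sets[OF cs] by (intro sets_pair_measure_cong) auto
  have "(\<lambda>(z, xs). Phi N (\<lambda>i. f (fst z) \<bullet> f (xs i) - f (fst z) \<bullet> f (snd z))) \<in> borel_measurable ((D c \<Otimes>\<^sub>M D c) \<Otimes>\<^sub>M P cs)"
    by (subst measurable_cong_sets[OF se refl]) (rule mx)
  then have "(\<lambda>z. \<integral>xs. Phi N (\<lambda>i. f (fst z) \<bullet> f (xs i) - f (fst z) \<bullet> f (snd z)) \<partial>P cs) \<in> borel_measurable (D c \<Otimes>\<^sub>M D c)"
    by (rule Pp.borel_measurable_lebesgue_integral)
  then show ?thesis unfolding H_def .
qed

end

lemma G_eq: "- ln (exp a / (exp a + (\<Sum>i<N. exp (b i)))) = Phi N (\<lambda>i. b i - a)"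
proof -
  have "exp a + (\<Sum>i<N. exp (b i)) = exp a * (1 + (\<Sum>i<N. exp (b i - a)))"
    by (simp add: distrib_left sum_distrib_left exp_diff)
  then have "exp a / (exp a + (\<Sum>i<N. exp (b i))) = 1 / (1 + (\<Sum>i<N. exp (b i - a)))"
    by simp
  then show ?thesis unfolding Phi_def using Phi_pos_arg[of "\<lambda>i. b i - a" N]
    by (simp add: ln_div)
qed

context setting begin

definition CS where "CS = PiE {..<N} (\<lambda>_. C)"
definition K where "K x xp = (1 / real (card C) ^ N) * (\<Sum>cs\<in>CS. H cs x xp)"
definition U where "U x xp = ln (real N + 1) + real N * (norm (f x) * (Bn + norm (f xp)))"

lemma card_CS: "card CS = card C ^ N"
  unfolding CS_def using finC by (simp add: card_PiE)

lemma finite_CS: "finite CS"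
  unfolding CS_def using finC by (simp add: finite_PiE)

lemma cardC_pos: "0 < card C" using C2 by simp

lemma H_bounds:
  assumes cs: "cs \<in> CS"
  shows "0 \<le> H cs x xp" "H cs x xp \<le> U x xp"
    "Phi N (\<lambda>i. f x \<bullet> mu (cs i) - f x \<bullet> f xp) \<le> H cs x xp"
  using step1[of cs x xp] cs unfolding CS_def H_def U_def
  by (auto intro!: Bochner_Integration.integral_nonneg simp: Phi_nonneg)

lemma K_bounds: "0 \<le> K x xp" "K x xp \<le> U x xp"
proof -
  show "0 \<le> K x xp" unfolding K_def using H_bounds(1) by (intro mult_nonneg_nonneg sum_nonneg) auto
  have "(\<Sum>cs\<in>CS. H cs x xp) \<le> (\<Sum>cs\<in>CS. U x xp)" using H_bounds by (intro sum_mono) auto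
  also have "\<dots> = real (card C) ^ N * U x xp" by (simp add: card_CS)
  finally show "K x xp \<le> U x xp" unfolding K_def using cardC_pos
    by (simp add: field_simps)
qed

lemma K_meas: "c \<in> C \<Longrightarrow> (\<lambda>z. K (fst z) (snd z)) \<in> borel_measurable (D c \<Otimes>\<^sub>M D c)"
  unfolding K_def using H_meas unfolding CS_def
  by (intro borel_measurable_times borel_measurable_const borel_measurable_sum) auto

lemma U_int: "c \<in> C \<Longrightarrow> integrable (D c) (\<lambda>xp. U x xp)"
  unfolding U_def using int_const int_norm
  by (intro Bochner_Integration.integrable_add Bochner_Integration.integrable_mult_right) auto

lemma meas_one: "c \<in> C \<Longrightarrow> measure (D c) (space (D c)) = 1"
  using prob by (simp add: prob_space.prob_space)

lemma U_integral: "c \<in> C \<Longrightarrow> (\<integral>xp. U x xp \<partial>D c) = ln (real N + 1) + real N * (norm (f x) * (Bn + (\<integral>xp. norm (f xp) \<partial>D c)))"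
  unfolding U_def using int_const int_norm integral_const_D meas_one
  by (simp add: Bochner_Integration.integral_add distrib_left)

lemma H_int: "c \<in> C \<Longrightarrow> cs \<in> CS \<Longrightarrow> x \<in> space (D c) \<Longrightarrow> integrable (D c) (\<lambda>xp. H cs x xp)"
proof (rule Bochner_Integration.integrable_bound[OF U_int])
  assume c: "c \<in> C" and cs: "cs \<in> CS" and x: "x \<in> space (D c)"
  show "(\<lambda>xp. H cs x xp) \<in> borel_measurable (D c)"
    using measurable_Pair2[OF H_meas[of cs c] x] cs c unfolding CS_def by simp
  show "AE xp in D c. norm (H cs x xp) \<le> norm (U x xp)"
  proof (intro AE_I2)
    fix xp
    have "0 \<le> H cs x xp" "H cs x xp \<le> U x xp" by (rule H_bounds[OF cs])+
    then show "norm (H cs x xp) \<le> norm (U x xp)" by simp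
  qed
qed

lemma K_int: "c \<in> C \<Longrightarrow> x \<in> space (D c) \<Longrightarrow> integrable (D c) (\<lambda>xp. K x xp)"
  unfolding K_def using H_int finite_CS
  by (intro Bochner_Integration.integrable_mult_right Bochner_Integration.integrable_sum) auto

lemma J_int: "c \<in> C \<Longrightarrow> integrable (D c) (\<lambda>x. \<integral>xp. K x xp \<partial>D c)"
proof -
  assume c: "c \<in> C"
  interpret Dc: prob_space "D c" by (rule prob[OF c])
  define V where "V x = ln (real N + 1) + real N * (norm (f x) * (Bn + (\<integral>xp. norm (f xp) \<partial>D c)))" for x
  have Vi: "integrable (D c) V"
    unfolding V_def using int_const[OF c] int_norm[OF c]
    by (intro Bochner_Integration.integrable_add Bochner_Integration.integrable_mult_right Bochner_Integration.integrable_mult_left) auto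
  show ?thesis
  proof (rule Bochner_Integration.integrable_bound[OF Vi])
    show "(\<lambda>x. \<integral>xp. K x xp \<partial>D c) \<in> borel_measurable (D c)"
      using K_meas[OF c] by (intro Dc.borel_measurable_lebesgue_integral) (simp add: case_prod_beta')
    show "AE x in D c. norm (\<integral>xp. K x xp \<partial>D c) \<le> norm (V x)"
    proof (intro AE_I2)
      fix x assume x: "x \<in> space (D c)"
      have "0 \<le> (\<integral>xp. K x xp \<partial>D c)" using K_bounds by (intro Bochner_Integration.integral_nonneg) auto
      moreover have "(\<integral>xp. K x xp \<partial>D c) \<le> (\<integral>xp. U x xp \<partial>D c)"
        using K_bounds by (intro Bochner_Integration.integral_mono K_int U_int c x) auto
      moreover have "0 \<le> V x" unfolding V_def using Bn_nonneg
        by (intro add_nonneg_nonneg mult_nonneg_nonneg) auto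
      ultimately show "norm (\<integral>xp. K x xp \<partial>D c) \<le> norm (V x)"
        using U_integral[OF c, of x] unfolding V_def by simp
    qed
  qed
qed

end

lemma comb_sym:
  fixes c :: 'c and N :: nat and C :: "'c set"
  defines "R \<equiv> PiE {..<N} (\<lambda>_. C) - {(\<lambda>i\<in>{..<N}. c)}"
  defines "m \<equiv> \<lambda>cs. (\<Sum>i<N. if cs i \<noteq> c then 1 else 0) :: real"
  defines "cnt \<equiv> \<lambda>cs c'. (\<Sum>i<N. if cs i = c' then 1 else 0) :: real"
  assumes c1: "c1 \<in> C" "c1 \<noteq> c" and c2: "c2 \<in> C" "c2 \<noteq> c" and c: "c \<in> C"
  shows "(\<Sum>cs\<in>R. cnt cs c1 / m cs) = (\<Sum>cs\<in>R. cnt cs c2 / m cs)"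
proof -
  define \<pi> where "\<pi> y = (if y = c1 then c2 else if y = c2 then c1 else y)" for y
  define \<phi> where "\<phi> cs = (\<lambda>i. if i < N then \<pi> (cs i) else undefined)" for cs :: "nat \<Rightarrow> 'c"
  have piC: "y \<in> C \<Longrightarrow> \<pi> y \<in> C" for y using c1 c2 by (auto simp: \<pi>_def)
  have pipi: "\<pi> (\<pi> y) = y" for y by (auto simp: \<pi>_def)
  have pic: "\<pi> y = c \<longleftrightarrow> y = c" for y using c1 c2 by (auto simp: \<pi>_def)
  have pic2: "\<pi> y = c2 \<longleftrightarrow> y = c1" for y using c1 c2 by (auto simp: \<pi>_def)
  have phiR: "\<phi> cs \<in> R" if "cs \<in> R" for cs
  proof -
    have "\<phi> cs \<in> PiE {..<N} (\<lambda>_. C)" using that piC by (auto simp: R_def \<phi>_def PiE_iff extensional_def)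
    moreover have "\<phi> cs \<noteq> (\<lambda>i\<in>{..<N}. c)"
    proof
      assume "\<phi> cs = (\<lambda>i\<in>{..<N}. c)"
      then have e: "\<phi> cs i = (\<lambda>i\<in>{..<N}. c) i" for i by simp
      have "cs i = (\<lambda>i\<in>{..<N}. c) i" for i
      proof (cases "i < N")
        case True
        then show ?thesis using e[of i] by (simp add: \<phi>_def pic)
      next
        case False
        then show ?thesis using that by (auto simp: R_def PiE_iff extensional_def)
      qed
      then have "\<forall>i. cs i = (\<lambda>i\<in>{..<N}. c) i" by blast
      then show False using that by (auto simp: R_def)
    qed
    ultimately show ?thesis by (simp add: R_def)
  qed
  have phiphi: "\<phi> (\<phi> cs) = cs" if "cs \<in> R" for cs
    using that by (auto simp: fun_eq_iff \<phi>_def pipi R_def PiE_iff extensional_def)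
  have bij: "bij_betw \<phi> R R"
    by (rule bij_betw_byWitness[where f' = \<phi>]) (use phiR phiphi in auto)
  have m_phi: "m (\<phi> cs) = m cs" for cs
    unfolding m_def \<phi>_def by (intro sum.cong) (auto simp: pic)
  have cnt_phi: "cnt (\<phi> cs) c2 = cnt cs c1" for cs
    unfolding cnt_def \<phi>_def by (intro sum.cong) (auto simp: pic2)
  have "(\<Sum>cs\<in>R. cnt cs c1 / m cs) = (\<Sum>cs\<in>R. cnt (\<phi> cs) c2 / m (\<phi> cs))"
    by (simp add: m_phi cnt_phi)
  also have "\<dots> = (\<Sum>cs\<in>R. cnt cs c2 / m cs)"
    by (rule sum.reindex_bij_betw[OF bij, where g = "\<lambda>cs. cnt cs c2 / m cs"])
  finally show ?thesis .
qed


lemma comb_main: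
  fixes t :: "'c \<Rightarrow> real" and C :: "'c set" and N :: nat
  assumes finC: "finite C" and c: "c \<in> C" and C2: "2 \<le> card C" and N1: "1 \<le> N" and tc: "t c = 0"
  shows "ln (real N + 1) + ((real (card C) ^ N - 1) / (real (card C) - 1)) * (\<Sum>c'\<in>C-{c}. ln (1 + exp (t c')))
         \<le> (\<Sum>cs\<in>PiE {..<N} (\<lambda>_. C). Phi N (\<lambda>i. t (cs i)))"
proof -
  define CS where "CS = PiE {..<N} (\<lambda>_. C)"
  define cs0 where "cs0 = (\<lambda>i\<in>{..<N}. c)"
  define R where "R = PiE {..<N} (\<lambda>_. C) - {(\<lambda>i\<in>{..<N}. c)}"
  define m :: "(nat \<Rightarrow> 'c) \<Rightarrow> real" where "m = (\<lambda>cs. (\<Sum>i<N. if cs i \<noteq> c then 1 else 0))"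
  define cnt :: "(nat \<Rightarrow> 'c) \<Rightarrow> 'c \<Rightarrow> real" where "cnt = (\<lambda>cs c'. (\<Sum>i<N. if cs i = c' then 1 else 0))"
  define \<psi> where "\<psi> c' = ln (1 + exp (t c'))" for c'
  define n where "n = card C"
  have finCS: "finite CS" unfolding CS_def using finC by (simp add: finite_PiE)
  have cs0CS: "cs0 \<in> CS" unfolding CS_def cs0_def using c by auto
  have R_eq: "R = CS - {cs0}" unfolding R_def CS_def cs0_def by simp
  have finR: "finite R" using finCS R_eq by simp
  have cardCS: "card CS = n ^ N" unfolding CS_def n_def using finC by (simp add: card_PiE)
  have n2: "2 \<le> n" using C2 n_def by simp
  have cardR: "real (card R) = real n ^ N - 1"
  proof -
    have "card R = card CS - 1" using R_eq cs0CS finCS by simp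
    moreover have "1 \<le> card CS" using cs0CS finCS by (metis One_nat_def card_0_eq empty_iff less_one not_le)
    ultimately show ?thesis using cardCS by (simp add: of_nat_diff)
  qed
  have split: "(\<Sum>cs\<in>CS. Phi N (\<lambda>i. t (cs i))) = Phi N (\<lambda>i. t (cs0 i)) + (\<Sum>cs\<in>R. Phi N (\<lambda>i. t (cs i)))"
    using R_eq cs0CS finCS by (simp add: sum.remove)
  have phi0: "Phi N (\<lambda>i. t (cs0 i)) = ln (real N + 1)"
  proof -
    have "Phi N (\<lambda>i. t (cs0 i)) = Phi N (\<lambda>_. 0)" by (rule Phi_cong) (simp add: cs0_def tc)
    then show ?thesis by (simp add: Phi_zero)
  qed
  have csC: "cs \<in> R \<Longrightarrow> i < N \<Longrightarrow> cs i \<in> C" for cs i unfolding R_def by auto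
  have decomp: "(\<Sum>i<N. if cs i \<noteq> c then g (cs i) else 0) = (\<Sum>c'\<in>C-{c}. cnt cs c' * g c')"
    if cs: "cs \<in> R" for cs and g :: "'c \<Rightarrow> real"
  proof -
    have "(\<Sum>c'\<in>C-{c}. cnt cs c' * g c') = (\<Sum>c'\<in>C-{c}. \<Sum>i<N. if cs i = c' then g c' else 0)"
      unfolding cnt_def sum_distrib_right by (intro sum.cong refl) auto
    also have "\<dots> = (\<Sum>i<N. \<Sum>c'\<in>C-{c}. if cs i = c' then g c' else 0)" by (rule sum.swap)
    also have "\<dots> = (\<Sum>i<N. if cs i \<noteq> c then g (cs i) else 0)"
      using finC csC[OF cs] by (intro sum.cong) (auto simp: sum.delta')
    finally show ?thesis by simp
  qed
  have m_eq: "m cs = (\<Sum>c'\<in>C-{c}. cnt cs c')" if "cs \<in> R" for cs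
    using decomp[OF that, of "\<lambda>_. 1"] unfolding m_def by simp
  have mpos: "1 \<le> m cs" if cs: "cs \<in> R" for cs
  proof -
    have "\<exists>i<N. cs i \<noteq> c"
    proof (rule ccontr)
      assume "\<not> (\<exists>i<N. cs i \<noteq> c)"
      then have "cs = cs0" using cs unfolding R_def cs0_def
        by (auto simp: fun_eq_iff PiE_iff extensional_def)
      then show False using cs R_eq by simp
    qed
    then obtain i where i: "i < N" "cs i \<noteq> c" by blast
    have "(if cs i \<noteq> c then 1 else 0) \<le> m cs" unfolding m_def
      by (rule member_le_sum[where f = "\<lambda>i. if cs i \<noteq> c then 1 else (0::real)"]) (use i in auto)
    then show ?thesis using i by simp
  qed
  have lowerR: "(\<Sum>c'\<in>C-{c}. (cnt cs c' / m cs) * \<psi> c') \<le> Phi N (\<lambda>i. t (cs i))" if cs: "cs \<in> R" for cs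
  proof -
    have "(\<Sum>c'\<in>C-{c}. cnt cs c' * \<psi> c') = (\<Sum>i<N. if cs i \<noteq> c then \<psi> (cs i) else 0)"
      using decomp[OF cs, of \<psi>] by simp
    also have "\<dots> \<le> (\<Sum>i<N. (if cs i \<noteq> c then 1 else 0) * Phi N (\<lambda>i. t (cs i)))"
      using Phi_ge_single[of _ N "\<lambda>i. t (cs i)"] Phi_nonneg
      by (intro sum_mono) (auto simp: \<psi>_def)
    also have "\<dots> = m cs * Phi N (\<lambda>i. t (cs i))" unfolding m_def by (simp add: sum_distrib_right)
    finally have "(\<Sum>c'\<in>C-{c}. cnt cs c' * \<psi> c') \<le> m cs * Phi N (\<lambda>i. t (cs i))" .
    moreover have "(\<Sum>c'\<in>C-{c}. (cnt cs c' / m cs) * \<psi> c') = (\<Sum>c'\<in>C-{c}. cnt cs c' * \<psi> c') / m cs"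
      by (simp add: sum_divide_distrib)
    ultimately show ?thesis using mpos[OF cs] by (simp add: divide_le_eq mult.commute)
  qed
  define B where "B c' = (\<Sum>cs\<in>R. cnt cs c' / m cs)" for c'
  obtain c1 where c1: "c1 \<in> C" "c1 \<noteq> c"
  proof -
    have "C - {c} \<noteq> {}"
    proof
      assume "C - {c} = {}"
      then have "C \<subseteq> {c}" by auto
      then have "card C \<le> 1" using card_mono[of "{c}" C] by auto
      then show False using C2 by simp
    qed
    then show ?thesis using that by auto
  qed
  have Bconst: "B c' = B c1" if "c' \<in> C - {c}" for c'
    unfolding B_def R_def cnt_def m_def
    by (rule comb_sym) (use that c1 c in auto)
  have "(\<Sum>c'\<in>C-{c}. B c') = (\<Sum>cs\<in>R. \<Sum>c'\<in>C-{c}. cnt cs c' / m cs)"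
    unfolding B_def by (rule sum.swap)
  also have "\<dots> = (\<Sum>cs\<in>R. 1)"
  proof (rule sum.cong[OF refl])
    fix cs assume cs: "cs \<in> R"
    show "(\<Sum>c'\<in>C-{c}. cnt cs c' / m cs) = 1"
      using m_eq[OF cs] mpos[OF cs] by (simp add: sum_divide_distrib[symmetric])
  qed
  also have "\<dots> = real n ^ N - 1" using cardR by simp
  finally have sumB: "(\<Sum>c'\<in>C-{c}. B c') = real n ^ N - 1" .
  have cardC1: "card (C - {c}) = n - 1" using c finC n_def by simp
  have "(\<Sum>c'\<in>C-{c}. B c') = real (n - 1) * B c1"
    using Bconst by (simp add: cardC1)
  then have B1: "B c1 = (real n ^ N - 1) / (real n - 1)"
    using sumB n2 by (simp add: of_nat_diff field_simps)
  have "(\<Sum>cs\<in>R. \<Sum>c'\<in>C-{c}. (cnt cs c' / m cs) * \<psi> c') = (\<Sum>c'\<in>C-{c}. B c' * \<psi> c')"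
    unfolding B_def by (subst sum.swap) (simp add: sum_distrib_right)
  also have "\<dots> = (\<Sum>c'\<in>C-{c}. ((real n ^ N - 1) / (real n - 1)) * \<psi> c')"
    using Bconst B1 by (intro sum.cong) auto
  finally have eqR: "(\<Sum>cs\<in>R. \<Sum>c'\<in>C-{c}. (cnt cs c' / m cs) * \<psi> c') = ((real n ^ N - 1) / (real n - 1)) * (\<Sum>c'\<in>C-{c}. \<psi> c')"
    by (simp add: sum_distrib_left)
  have "((real n ^ N - 1) / (real n - 1)) * (\<Sum>c'\<in>C-{c}. \<psi> c') \<le> (\<Sum>cs\<in>R. Phi N (\<lambda>i. t (cs i)))"
    unfolding eqR[symmetric] by (intro sum_mono lowerR)
  then show ?thesis using split phi0 unfolding CS_def n_def \<psi>_def by simp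
qed

context setting begin

definition E where "E c c' = (\<integral>x. ln (1 + exp (f x \<bullet> mu c' - f x \<bullet> mu c)) \<partial>D c)"

lemma int_inner2: "c \<in> C \<Longrightarrow> integrable (D c) (\<lambda>y. a - b \<bullet> f y)"
  using fint int_const by (intro Bochner_Integration.integrable_diff integrable_inner_right) auto

lemma int_inner3: "c \<in> C \<Longrightarrow> integrable (D c) (\<lambda>y. f y \<bullet> a - f y \<bullet> b)"
  using fint by (intro Bochner_Integration.integrable_diff integrable_inner_left) auto

lemma psi_int: "c \<in> C \<Longrightarrow> integrable (D c) (\<lambda>x. ln (1 + exp (f x \<bullet> a - f x \<bullet> b)))"
  using jensen_Phi(1)[where M = "D c" and N = 1 and Y = "\<lambda>i x. f x \<bullet> a - f x \<bullet> b", OF prob int_inner3]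
  by (simp add: Phi_def)

lemma J_lower:
  assumes c: "c \<in> C" and x: "x \<in> space (D c)"
  shows "(1 / real (card C) ^ N) * (\<Sum>cs\<in>CS. Phi N (\<lambda>i. f x \<bullet> mu (cs i) - f x \<bullet> mu c)) \<le> (\<integral>xp. K x xp \<partial>D c)"
proof -
  have eqK: "(\<integral>xp. K x xp \<partial>D c) = (1 / real (card C) ^ N) * (\<Sum>cs\<in>CS. \<integral>xp. H cs x xp \<partial>D c)"
    unfolding K_def using H_int[OF c _ x] finite_CS
    by (simp add: Bochner_Integration.integral_sum)
  have each: "Phi N (\<lambda>i. f x \<bullet> mu (cs i) - f x \<bullet> mu c) \<le> (\<integral>xp. H cs x xp \<partial>D c)" if cs: "cs \<in> CS" for cs
  proof -
    note J2 = jensen_Phi[where M = "D c" and N = N and Y = "\<lambda>i xp. f x \<bullet> mu (cs i) - f x \<bullet> f xp", OF prob[OF c] int_inner2[OF c]]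
    have "Phi N (\<lambda>i. \<integral>xp. f x \<bullet> mu (cs i) - f x \<bullet> f xp \<partial>D c) = Phi N (\<lambda>i. f x \<bullet> mu (cs i) - f x \<bullet> mu c)"
      using int_const[OF c] fint[OF c] integral_const_D[OF c]
      by (intro Phi_cong) (simp add: Bochner_Integration.integral_diff mu_def)
    moreover have "(\<integral>xp. Phi N (\<lambda>i. f x \<bullet> mu (cs i) - f x \<bullet> f xp) \<partial>D c) \<le> (\<integral>xp. H cs x xp \<partial>D c)"
      by (intro Bochner_Integration.integral_mono J2(1) H_int c cs x H_bounds(3))
    ultimately show ?thesis using J2(2) by simp
  qed
  show ?thesis unfolding eqK using each cardC_pos
    by (intro mult_left_mono sum_mono) auto
qed

lemma Lun_eq: "Lun C D N f = (1 / real (card C)) * (\<Sum>c\<in>C. \<integral>x. \<integral>xp. K x xp \<partial>D c \<partial>D c)"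
  unfolding Lun_def K_def H_def P_def CS_def G_eq by simp

lemma lower_int: "c \<in> C \<Longrightarrow> integrable (D c) (\<lambda>x. (1 / real (card C) ^ N) * (\<Sum>cs\<in>CS. Phi N (\<lambda>i. f x \<bullet> mu (cs i) - f x \<bullet> mu c)))"
  using jensen_Phi(1)[where M = "D c" and N = N, OF prob int_inner3] finite_CS
  by (intro Bochner_Integration.integrable_mult_right Bochner_Integration.integrable_sum) auto

lemma Lun_lower:
  "(1 / real (card C)) * (\<Sum>c\<in>C. (1 / real (card C) ^ N) *
      (ln (real N + 1) + ((real (card C) ^ N - 1) / (real (card C) - 1)) * (\<Sum>c'\<in>C-{c}. E c c')))
   \<le> Lun C D N f"
proof -
  have step: "(1 / real (card C) ^ N) * (ln (real N + 1) + ((real (card C) ^ N - 1) / (real (card C) - 1)) * (\<Sum>c'\<in>C-{c}. E c c'))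
      \<le> (\<integral>x. \<integral>xp. K x xp \<partial>D c \<partial>D c)" if c: "c \<in> C" for c
  proof -
    define A where "A = (real (card C) ^ N - 1) / (real (card C) - 1)"
    define low where "low x = (1 / real (card C) ^ N) * (ln (real N + 1) + A * (\<Sum>c'\<in>C-{c}. ln (1 + exp (f x \<bullet> mu c' - f x \<bullet> mu c))))" for x
    have low_int: "integrable (D c) low"
      unfolding low_def using int_const[OF c] psi_int[OF c]
      by (intro Bochner_Integration.integrable_mult_right Bochner_Integration.integrable_add Bochner_Integration.integrable_sum) auto
    have "(\<integral>x. low x \<partial>D c) = (1 / real (card C) ^ N) * (ln (real N + 1) + A * (\<Sum>c'\<in>C-{c}. E c c'))"
      unfolding low_def E_def using int_const[OF c] psi_int[OF c] integral_const_D[OF c] meas_one[OF c]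
      by (simp add: Bochner_Integration.integral_sum Bochner_Integration.integrable_sum)
    moreover have "(\<integral>x. low x \<partial>D c) \<le> (\<integral>x. (1 / real (card C) ^ N) * (\<Sum>cs\<in>CS. Phi N (\<lambda>i. f x \<bullet> mu (cs i) - f x \<bullet> mu c)) \<partial>D c)"
    proof (intro Bochner_Integration.integral_mono low_int lower_int c)
      fix x
      have "ln (real N + 1) + A * (\<Sum>c'\<in>C-{c}. ln (1 + exp (f x \<bullet> mu c' - f x \<bullet> mu c)))
            \<le> (\<Sum>cs\<in>CS. Phi N (\<lambda>i. f x \<bullet> mu (cs i) - f x \<bullet> mu c))"
        unfolding A_def CS_def
        by (rule comb_main[where t = "\<lambda>c'. f x \<bullet> mu c' - f x \<bullet> mu c"]) (use finC c C2 N1 in auto)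
      then show "low x \<le> (1 / real (card C) ^ N) * (\<Sum>cs\<in>CS. Phi N (\<lambda>i. f x \<bullet> mu (cs i) - f x \<bullet> mu c))"
        unfolding low_def using cardC_pos by (intro mult_left_mono) auto
    qed
    moreover have "(\<integral>x. (1 / real (card C) ^ N) * (\<Sum>cs\<in>CS. Phi N (\<lambda>i. f x \<bullet> mu (cs i) - f x \<bullet> mu c)) \<partial>D c)
        \<le> (\<integral>x. \<integral>xp. K x xp \<partial>D c \<partial>D c)"
      by (intro Bochner_Integration.integral_mono lower_int J_int J_lower c)
    ultimately show ?thesis unfolding A_def by simp
  qed
  show ?thesis unfolding Lun_eq using step cardC_pos
    by (intro mult_left_mono sum_mono) auto
qed

end

lemma tau_val:
  assumes finC: "finite C" and ne: "C \<noteq> {}"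
  shows "tau_plus C N = 1 / real (card C) ^ N"
proof -
  define p where "p = pair_pmf (pmf_of_set C) (Pi_pmf {..<N} undefined (\<lambda>_. pmf_of_set C))"
  define S where "S = {(c, cs). \<forall>i<N. cs i = (c :: 'a)}"
  define g where "g c = (\<lambda>i. if i < N then c else undefined)" for c :: 'a
  have setp: "set_pmf p = C \<times> PiE_dflt {..<N} undefined (\<lambda>_. C)"
    unfolding p_def using finC ne by (simp add: set_Pi_pmf o_def)
  have SI: "S \<inter> set_pmf p = (\<lambda>c. (c, g c)) ` C"
    unfolding setp S_def g_def PiE_dflt_def by (auto simp: fun_eq_iff)
  have inj: "inj_on (\<lambda>c. (c, g c)) C" by (auto simp: inj_on_def)
  have pm: "pmf p (c, g c) = (1 / real (card C)) ^ Suc N" if "c \<in> C" for c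
    unfolding p_def using that finC ne by (simp add: pmf_pair pmf_Pi g_def pmf_of_set[OF ne finC] power_Suc)
  have "tau_plus C N = measure (measure_pmf p) S"
    unfolding tau_plus_def p_def S_def by simp
  also have "\<dots> = measure (measure_pmf p) (S \<inter> set_pmf p)" by (simp add: measure_Int_set_pmf)
  also have "\<dots> = (\<Sum>c\<in>C. pmf p (c, g c))"
    unfolding SI using finC inj by (simp add: measure_measure_pmf_finite sum.reindex)
  also have "\<dots> = real (card C) * (1 / real (card C)) ^ Suc N" using pm by simp
  also have "\<dots> = 1 / real (card C) ^ N" using finC ne by (simp add: field_simps)
  finally show ?thesis .
qed

lemma binom_id:
  assumes "1 \<le> k" "k + 1 \<le> n"
  shows "(n choose (k + 1)) * (k + 1) * k = n * (n - 1) * ((n - 2) choose (k - 1))"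
proof -
  obtain k1 where k: "k = Suc k1" using assms by (cases k) auto
  obtain n2 where n: "n = Suc (Suc n2)" using assms k by (cases n; cases "n - 1") auto
  have a: "Suc (Suc k1) * (Suc (Suc n2) choose Suc (Suc k1)) = Suc (Suc n2) * (Suc n2 choose Suc k1)"
    by (rule Suc_times_binomial)
  have b: "Suc k1 * (Suc n2 choose Suc k1) = Suc n2 * (n2 choose k1)"
    by (rule Suc_times_binomial)
  have a': "(n choose (k + 1)) * (k + 1) = n * ((n - 1) choose k)" using a unfolding k n by (simp add: mult.commute)
  have b': "((n - 1) choose k) * k = (n - 1) * ((n - 2) choose (k - 1))" using b unfolding k n by (simp add: mult.commute)
  have "(n choose (k + 1)) * (k + 1) * k = n * (((n - 1) choose k) * k)" using a' by (simp add: mult.assoc)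
  also have "\<dots> = n * (n - 1) * ((n - 2) choose (k - 1))" using b' by (simp add: mult.assoc)
  finally show ?thesis .
qed

lemma count_tasks:
  assumes finC: "finite C" and c: "c \<in> C" "c' \<in> C" "c \<noteq> c'" and k: "1 \<le> k"
  shows "card {T \<in> tasks C k. c \<in> T \<and> c' \<in> T} = (card C - 2) choose (k - 1)"
proof -
  let ?L = "{T \<in> tasks C k. c \<in> T \<and> c' \<in> T}"
  let ?R = "{U. U \<subseteq> C - {c, c'} \<and> card U = k - 1}"
  have "?L = (\<lambda>U. U \<union> {c, c'}) ` ?R"
  proof (intro equalityI subsetI)
    fix T assume T: "T \<in> ?L"
    then have fT: "finite T" using finC unfolding tasks_def by (auto intro: finite_subset)
    have c2: "card {c, c'} = 2" using c by simp
    have "T - {c, c'} \<in> ?R" using T fT c2 unfolding tasks_def by (auto simp: card_Diff_subset)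
    moreover have "T = (T - {c, c'}) \<union> {c, c'}" using T by auto
    ultimately show "T \<in> (\<lambda>U. U \<union> {c, c'}) ` ?R" by blast
  next
    fix T assume "T \<in> (\<lambda>U. U \<union> {c, c'}) ` ?R"
    then obtain U where U: "U \<subseteq> C - {c, c'}" "card U = k - 1" and T: "T = U \<union> {c, c'}" by blast
    have fU: "finite U" using U finC by (auto intro: finite_subset)
    have "card T = card U + card {c, c'}" unfolding T using U fU by (intro card_Un_disjoint) auto
    then have "card T = k + 1" using U c k by simp
    then show "T \<in> ?L" using U c T unfolding tasks_def by auto
  qed
  moreover have "inj_on (\<lambda>U. U \<union> {c, c'}) ?R"
    by (rule inj_onI) auto
  ultimately have "card ?L = card ?R" by (simp add: card_image)
  also have "\<dots> = card (C - {c, c'}) choose (k - 1)" using finC by (intro n_subsets) auto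
  also have "card (C - {c, c'}) = card C - 2" using finC c by (simp add: card_Diff_subset)
  finally show ?thesis .
qed

lemma card_tasks: "finite C \<Longrightarrow> card (tasks C k) = card C choose (k + 1)"
  unfolding tasks_def by (rule n_subsets)

lemma ln_one_plus_sum_le:
  fixes y :: "'a \<Rightarrow> real"
  assumes "finite A" "\<And>a. a \<in> A \<Longrightarrow> 0 \<le> y a"
  shows "ln (1 + (\<Sum>a\<in>A. y a)) \<le> (\<Sum>a\<in>A. ln (1 + y a))"
  using assms
proof (induction A rule: finite_induct)
  case empty
  then show ?case by simp
next
  case (insert a A)
  have ya: "0 \<le> y a" using insert by auto
  have sA: "0 \<le> (\<Sum>a\<in>A. y a)" using insert by (auto intro: sum_nonneg)
  have "ln (1 + (\<Sum>a\<in>insert a A. y a)) = ln (1 + y a + (\<Sum>a\<in>A. y a))"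
    using insert by (simp add: add.assoc)
  also have "\<dots> \<le> ln ((1 + y a) * (1 + (\<Sum>a\<in>A. y a)))"
  proof -
    have p1: "0 < 1 + y a + (\<Sum>a\<in>A. y a)" using ya sA by linarith
    have "0 \<le> y a * (\<Sum>a\<in>A. y a)" using ya sA by simp
    then have le: "1 + y a + (\<Sum>a\<in>A. y a) \<le> (1 + y a) * (1 + (\<Sum>a\<in>A. y a))" by (simp add: algebra_simps)
    show ?thesis using p1 le by (subst ln_le_cancel_iff) auto
  qed
  also have "\<dots> = ln (1 + y a) + ln (1 + (\<Sum>a\<in>A. y a))"
    using ya sA by (simp add: ln_mult)
  also have "\<dots> \<le> ln (1 + y a) + (\<Sum>a\<in>A. ln (1 + y a))"
    using insert by simp
  finally show ?case using insert by simp
qed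

lemma lsup_pt:
  fixes a :: "'c \<Rightarrow> real"
  assumes "finite T" "c \<in> T"
  shows "- ln (exp (a c) / (\<Sum>c'\<in>T. exp (a c'))) \<le> (\<Sum>c'\<in>T-{c}. ln (1 + exp (a c' - a c)))"
proof -
  have "(\<Sum>c'\<in>T. exp (a c')) = exp (a c) + (\<Sum>c'\<in>T-{c}. exp (a c'))"
    using assms by (simp add: sum.remove)
  also have "\<dots> = exp (a c) * (1 + (\<Sum>c'\<in>T-{c}. exp (a c' - a c)))"
    by (simp add: distrib_left sum_distrib_left exp_diff)
  finally have eq: "(\<Sum>c'\<in>T. exp (a c')) = exp (a c) * (1 + (\<Sum>c'\<in>T-{c}. exp (a c' - a c)))" .
  have pos: "0 < 1 + (\<Sum>c'\<in>T-{c}. exp (a c' - a c))" by (smt (verit) exp_gt_zero sum_nonneg)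
  have "- ln (exp (a c) / (\<Sum>c'\<in>T. exp (a c'))) = ln (1 + (\<Sum>c'\<in>T-{c}. exp (a c' - a c)))"
    unfolding eq using pos by (simp add: ln_div)
  also have "\<dots> \<le> (\<Sum>c'\<in>T-{c}. ln (1 + exp (a c' - a c)))"
    using assms by (intro ln_one_plus_sum_le) auto
  finally show ?thesis .
qed

lemma finite_tasks: "finite C \<Longrightarrow> finite (tasks C k)"
  unfolding tasks_def by (rule finite_subset[of _ "Pow C"]) auto

lemma swap_tasks:
  fixes g :: "'c \<Rightarrow> 'c \<Rightarrow> real"
  assumes finC: "finite C"
  shows "(\<Sum>T\<in>tasks C k. \<Sum>c\<in>T. \<Sum>c'\<in>T-{c}. g c c')
       = (\<Sum>c\<in>C. \<Sum>c'\<in>C-{c}. g c c' * real (card {T \<in> tasks C k. c \<in> T \<and> c' \<in> T}))"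
proof -
  have inner: "(\<Sum>c\<in>T. \<Sum>c'\<in>T-{c}. g c c') = (\<Sum>c\<in>C. \<Sum>c'\<in>C-{c}. if c \<in> T \<and> c' \<in> T then g c c' else 0)"
    if T: "T \<in> tasks C k" for T
  proof -
    have TC: "T \<subseteq> C" using T unfolding tasks_def by auto
    have "(\<Sum>c\<in>C. \<Sum>c'\<in>C-{c}. if c \<in> T \<and> c' \<in> T then g c c' else 0)
        = (\<Sum>c\<in>C. if c \<in> T then (\<Sum>c'\<in>C-{c}. if c' \<in> T then g c c' else 0) else 0)"
      by (intro sum.cong) auto
    also have "\<dots> = (\<Sum>c\<in>C. if c \<in> T then (\<Sum>c'\<in>(C-{c}) \<inter> T. g c c') else 0)"
    proof (intro sum.cong refl)
      fix c
      have "(\<Sum>c'\<in>(C-{c}) \<inter> T. g c c') = (\<Sum>c'\<in>C-{c}. if c' \<in> T then g c c' else 0)"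
        using finC by (intro sum.inter_restrict) auto
      then show "(if c \<in> T then (\<Sum>c'\<in>C-{c}. if c' \<in> T then g c c' else 0) else 0) = (if c \<in> T then (\<Sum>c'\<in>(C-{c}) \<inter> T. g c c') else 0)"
        by simp
    qed
    also have "\<dots> = (\<Sum>c\<in>C \<inter> T. \<Sum>c'\<in>(C-{c}) \<inter> T. g c c')"
      by (rule sum.inter_restrict[OF finC, symmetric])
    also have "\<dots> = (\<Sum>c\<in>T. \<Sum>c'\<in>T-{c}. g c c')"
    proof -
      have "C \<inter> T = T" using TC by auto
      moreover have "\<And>c. (C - {c}) \<inter> T = T - {c}" using TC by auto
      ultimately show ?thesis by simp
    qed
    finally show ?thesis by simp
  qed
  have "(\<Sum>T\<in>tasks C k. \<Sum>c\<in>T. \<Sum>c'\<in>T-{c}. g c c')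
      = (\<Sum>T\<in>tasks C k. \<Sum>c\<in>C. \<Sum>c'\<in>C-{c}. if c \<in> T \<and> c' \<in> T then g c c' else 0)"
    by (rule sum.cong[OF refl inner])
  also have "\<dots> = (\<Sum>c\<in>C. \<Sum>T\<in>tasks C k. \<Sum>c'\<in>C-{c}. if c \<in> T \<and> c' \<in> T then g c c' else 0)"
    by (rule sum.swap)
  also have "\<dots> = (\<Sum>c\<in>C. \<Sum>c'\<in>C-{c}. \<Sum>T\<in>tasks C k. if c \<in> T \<and> c' \<in> T then g c c' else 0)"
    by (intro sum.cong refl sum.swap)
  also have "\<dots> = (\<Sum>c\<in>C. \<Sum>c'\<in>C-{c}. g c c' * real (card {T \<in> tasks C k. c \<in> T \<and> c' \<in> T}))"
  proof (intro sum.cong refl)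
    fix c c'
    have "(\<Sum>T\<in>tasks C k. if c \<in> T \<and> c' \<in> T then g c c' else 0) = (\<Sum>T\<in>{T \<in> tasks C k. c \<in> T \<and> c' \<in> T}. g c c')"
      using finite_tasks[OF finC] by (rule sum.inter_filter[symmetric])
    then show "(\<Sum>T\<in>tasks C k. if c \<in> T \<and> c' \<in> T then g c c' else 0) = g c c' * real (card {T \<in> tasks C k. c \<in> T \<and> c' \<in> T})"
      by simp
  qed
  finally show ?thesis .
qed

context setting begin

lemma Lsup_mu_le:
  assumes T: "T \<in> tasks C k"
  shows "Lsup_mu T D f \<le> (1 / real (card T)) * (\<Sum>c\<in>T. \<Sum>c'\<in>T-{c}. E c c')"
proof -
  have TC: "T \<subseteq> C" using T unfolding tasks_def by auto
  have finT: "finite T" using TC finC by (rule finite_subset)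
  have mu_eq: "(\<lambda>c. \<integral>x. f x \<partial>D c) = mu" by (simp add: fun_eq_iff mu_def)
  have each: "(\<integral>x. - ln (exp (mu c \<bullet> f x) / (\<Sum>c'\<in>T. exp (mu c' \<bullet> f x))) \<partial>D c) \<le> (\<Sum>c'\<in>T-{c}. E c c')"
    if c: "c \<in> T" for c
  proof -
    have cC: "c \<in> C" using c TC by auto
    have "(\<integral>x. - ln (exp (mu c \<bullet> f x) / (\<Sum>c'\<in>T. exp (mu c' \<bullet> f x))) \<partial>D c)
        \<le> (\<integral>x. (\<Sum>c'\<in>T-{c}. ln (1 + exp (f x \<bullet> mu c' - f x \<bullet> mu c))) \<partial>D c)"
    proof (rule integral_mono')
      show "integrable (D c) (\<lambda>x. \<Sum>c'\<in>T-{c}. ln (1 + exp (f x \<bullet> mu c' - f x \<bullet> mu c)))"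
        using psi_int[OF cC] by (intro Bochner_Integration.integrable_sum) auto
      fix x
      show "0 \<le> (\<Sum>c'\<in>T-{c}. ln (1 + exp (f x \<bullet> mu c' - f x \<bullet> mu c)))"
        by (intro sum_nonneg) (simp add: add_pos_pos)
      have "- ln (exp (mu c \<bullet> f x) / (\<Sum>c'\<in>T. exp (mu c' \<bullet> f x))) \<le> (\<Sum>c'\<in>T-{c}. ln (1 + exp (mu c' \<bullet> f x - mu c \<bullet> f x)))"
        by (rule lsup_pt[OF finT c, where a = "\<lambda>c'. mu c' \<bullet> f x"])
      then show "- ln (exp (mu c \<bullet> f x) / (\<Sum>c'\<in>T. exp (mu c' \<bullet> f x))) \<le> (\<Sum>c'\<in>T-{c}. ln (1 + exp (f x \<bullet> mu c' - f x \<bullet> mu c)))"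
        by (simp add: inner_commute)
    qed
    also have "\<dots> = (\<Sum>c'\<in>T-{c}. E c c')"
      unfolding E_def using psi_int[OF cC] by (simp add: Bochner_Integration.integral_sum)
    finally show ?thesis .
  qed
  show ?thesis
    unfolding Lsup_mu_def Lsup_W_def mu_eq
    using each by (intro mult_left_mono sum_mono) auto
qed

end

lemma neg_ln_ratio_nonneg:
  fixes a :: "'c \<Rightarrow> real"
  assumes "finite T" "c \<in> T"
  shows "0 \<le> - ln (exp (a c) / (\<Sum>c'\<in>T. exp (a c')))"
proof -
  have le: "exp (a c) \<le> (\<Sum>c'\<in>T. exp (a c'))" using assms by (intro member_le_sum) auto
  have s: "0 < (\<Sum>c'\<in>T. exp (a c'))" using le exp_gt_zero[of "a c"] by linarith
  have pos: "0 < exp (a c) / (\<Sum>c'\<in>T. exp (a c'))" using s by (intro divide_pos_pos) auto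
  have "exp (a c) / (\<Sum>c'\<in>T. exp (a c')) \<le> 1" using le s by (simp add: divide_le_eq_1)
  then have "ln (exp (a c) / (\<Sum>c'\<in>T. exp (a c'))) \<le> 0" using pos by simp
  then show ?thesis by simp
qed

lemma cancel_aux: "a \<noteq> (0::real) \<Longrightarrow> k / b * S = k / a * (a / b * S)"
  by simp

theorem proposition3p3:
  fixes C :: "'c set" and D :: "'c \<Rightarrow> 'x measure" and X :: "'x measure"
    and f :: "'x \<Rightarrow> real^'d" and N k :: nat
  assumes "finite C"
    and "1 \<le> N"
    and "2 \<le> k + 1" and "k + 1 \<le> card C"
    and "\<And>c. c \<in> C \<Longrightarrow> prob_space (D c)"
    and "\<And>c. c \<in> C \<Longrightarrow> sets (D c) = sets X"
    and "f \<in> borel_measurable X"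
    and "\<And>c. c \<in> C \<Longrightarrow> integrable (D c) f"
  shows "Lsup_k C D k f \<le> Lsup_mu_k C D k f \<and>
         Lsup_mu_k C D k f \<le> real k / (1 - tau_plus C N) *
           (Lun C D N f - tau_plus C N * ln (real N + 1))"
proof -
  have C2: "2 \<le> card C" using assms(3,4) by linarith
  interpret setting C D X f N by (rule setting.intro[OF assms(1,2) C2 assms(5,6,7,8)])
  have k1: "1 \<le> k" using assms(3) by simp
  define n where "n = real (card C)"
  define S where "S = (\<Sum>c\<in>C. \<Sum>c'\<in>C-{c}. E c c')"
  define tau where "tau = tau_plus C N"
  have n2: "2 \<le> n" unfolding n_def using C2 by simp
  have tau_eq: "tau = 1 / n ^ N" unfolding tau_def n_def using finC C2 by (intro tau_val) auto
  have nN: "n \<le> n ^ N" using power_increasing[of 1 N n] n2 N1 by simp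
  have tau_lt: "tau < 1" using tau_eq nN n2 by simp
  have part1: "Lsup_k C D k f \<le> Lsup_mu_k C D k f"
    unfolding Lsup_k_def Lsup_mu_k_def
  proof (intro mult_left_mono sum_mono)
    fix T assume T: "T \<in> tasks C k"
    have TC: "T \<subseteq> C" using T unfolding tasks_def by auto
    have finT: "finite T" using TC finC by (rule finite_subset)
    have "0 \<le> Lsup_W T D f W" for W
      unfolding Lsup_W_def
      by (intro mult_nonneg_nonneg sum_nonneg Bochner_Integration.integral_nonneg neg_ln_ratio_nonneg finT) auto
    then have bdd: "bdd_below (range (Lsup_W T D f))" by (intro bdd_belowI[of _ 0]) auto
    show "Lsup T D f \<le> Lsup_mu T D f" unfolding Lsup_def Lsup_mu_def by (rule cINF_lower[OF bdd]) simp
  qed simp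
  have Lmu: "Lsup_mu_k C D k f \<le> real k / (n * (n - 1)) * S"
  proof -
    define ct where "ct = real (card C - 2 choose (k - 1))"
    define tk where "tk = real (card (tasks C k))"
    have tk: "tk = real (card C choose (k + 1))" unfolding tk_def using finC by (simp add: card_tasks)
    have bid: "tk * (real k + 1) * real k = n * (n - 1) * ct"
    proof -
      have "real ((card C choose (k + 1)) * (k + 1) * k) = real (card C * (card C - 1) * (card C - 2 choose (k - 1)))"
        using binom_id[OF k1 assms(4)] by simp
      then show ?thesis unfolding tk ct_def n_def using C2 by (simp add: of_nat_diff algebra_simps)
    qed
    have tkpos: "0 < tk" unfolding tk using assms(4) by simp
    have "Lsup_mu_k C D k f \<le> (1 / tk) * (\<Sum>T\<in>tasks C k. (1 / (real k + 1)) * (\<Sum>c\<in>T. \<Sum>c'\<in>T-{c}. E c c'))"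
      unfolding Lsup_mu_k_def tk_def
    proof (intro mult_left_mono sum_mono)
      fix T assume T: "T \<in> tasks C k"
      have "card T = k + 1" using T unfolding tasks_def by auto
      then show "Lsup_mu T D f \<le> 1 / (real k + 1) * (\<Sum>c\<in>T. \<Sum>c'\<in>T-{c}. E c c')"
        using Lsup_mu_le[OF T] by (simp add: add.commute)
    qed simp
    also have "(\<Sum>T\<in>tasks C k. (1 / (real k + 1)) * (\<Sum>c\<in>T. \<Sum>c'\<in>T-{c}. E c c'))
        = (1 / (real k + 1)) * (\<Sum>c\<in>C. \<Sum>c'\<in>C-{c}. E c c' * real (card {T \<in> tasks C k. c \<in> T \<and> c' \<in> T}))"
      by (subst sum_distrib_left[symmetric]) (simp only: swap_tasks[OF finC, of E k])
    also have "(\<Sum>c\<in>C. \<Sum>c'\<in>C-{c}. E c c' * real (card {T \<in> tasks C k. c \<in> T \<and> c' \<in> T})) = ct * S"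
      unfolding S_def ct_def sum_distrib_left
      by (intro sum.cong refl) (auto simp: count_tasks[OF finC _ _ _ k1])
    finally have "Lsup_mu_k C D k f \<le> 1 / tk * (1 / (real k + 1) * (ct * S))" .
    also have "1 / tk * (1 / (real k + 1) * (ct * S)) = real k / (n * (n - 1)) * S"
    proof -
      have d1: "tk * (real k + 1) \<noteq> 0" using tkpos by simp
      have d2: "n * (n - 1) \<noteq> 0" using n2 by simp
      have e: "ct * (n * (n - 1)) = real k * (tk * (real k + 1))" using bid by (metis mult.commute)
      have "ct / (tk * (real k + 1)) = real k / (n * (n - 1))"
        using e d1 d2 by (simp add: frac_eq_eq)
      then have "1 / tk * (1 / (real k + 1) * ct) = real k / (n * (n - 1))"
        by simp
      then show ?thesis by (metis mult.assoc)
    qed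
    finally show ?thesis .
  qed
  have Lun_ge: "tau * ln (real N + 1) + (1 - tau) / (n * (n - 1)) * S \<le> Lun C D N f"
  proof -
    define A where "A = (n ^ N - 1) / (n - 1)"
    have "(1 / n) * (\<Sum>c\<in>C. (1 / n ^ N) * (ln (real N + 1) + A * (\<Sum>c'\<in>C-{c}. E c c')))
        = (1 / n ^ N) * ln (real N + 1) + (1 / n) * (1 / n ^ N) * A * S"
    proof -
      have s1: "(\<Sum>c\<in>C. (1 / n ^ N) * (ln (real N + 1) + A * (\<Sum>c'\<in>C-{c}. E c c')))
          = (1 / n ^ N) * (\<Sum>c\<in>C. ln (real N + 1) + A * (\<Sum>c'\<in>C-{c}. E c c'))"
        by (rule sum_distrib_left[symmetric])
      have s2: "(\<Sum>c\<in>C. ln (real N + 1) + A * (\<Sum>c'\<in>C-{c}. E c c')) = n * ln (real N + 1) + A * S"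
        by (simp add: sum.distrib sum_distrib_left S_def n_def)
      have "(1 / n) * ((1 / n ^ N) * (n * ln (real N + 1) + A * S)) = (1 / n ^ N) * ln (real N + 1) + (1 / n) * (1 / n ^ N) * A * S"
        using n2 by (simp add: field_simps)
      then show ?thesis unfolding s1 s2 .
    qed
    also have "\<dots> = tau * ln (real N + 1) + (1 - tau) / (n * (n - 1)) * S"
      unfolding tau_eq A_def using n2 nN by (simp add: field_simps)
    finally have eq: "(1 / n) * (\<Sum>c\<in>C. (1 / n ^ N) * (ln (real N + 1) + A * (\<Sum>c'\<in>C-{c}. E c c')))
        = tau * ln (real N + 1) + (1 - tau) / (n * (n - 1)) * S" .
    have "(1 / n) * (\<Sum>c\<in>C. (1 / n ^ N) * (ln (real N + 1) + A * (\<Sum>c'\<in>C-{c}. E c c'))) \<le> Lun C D N f"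
      using Lun_lower unfolding A_def n_def .
    then show ?thesis unfolding eq .
  qed
  have "real k / (n * (n - 1)) * S = real k / (1 - tau) * ((1 - tau) / (n * (n - 1)) * S)"
    using tau_lt by (intro cancel_aux) simp
  also have "\<dots> \<le> real k / (1 - tau) * (Lun C D N f - tau * ln (real N + 1))"
    using Lun_ge tau_lt by (intro mult_left_mono) auto
  finally have "Lsup_mu_k C D k f \<le> real k / (1 - tau) * (Lun C D N f - tau * ln (real N + 1))"
    using Lmu by linarith
  then show ?thesis using part1 unfolding tau_def by simp
qed

end
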